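(* The maximum-matching size $m(\cdot)$ and the minimum vertex-cover size $VC(\cdot)$, viewed as functions on graph streams, are both $2$-almost-smooth.
   Context: A graph stream is a sequence of edges of a simple graph on vertex set $V=[n]$ (no edge appears twice). For a stream segment $S$, $m(S)$ is the maximum size of a matching (set of pairwise vertex-disjoint edges) in the graph on $V$ whose edges are those of $S$, and $VC(S)$ is the minimum size of a vertex cover (set of vertices meeting every edge) of that graph. For disjoint consecutive segments $A,B$, $AB$ is their concatenation. A function $f$ is $2$-almost-smooth if: (1) $f(A)\ge0$ for all $A$; (2) $f(B)\le f(AB)$ for all disjoint segments $A,B$; (3) $f(A)\le\mathrm{poly}(n)$; (4) for all disjoint consecutive segments $A,B,C$ with $f(AB)\neq0$, $f(ABC)\neq0$, $\frac{f(B)}{f(AB)}\le 2\cdot\frac{f(BC)}{f(ABC)}$. *)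

theory Defs
  imports Complex_Main
begin

type_synonym edge = "nat set"

definition valid_edge :: "nat \<Rightarrow> edge \<Rightarrow> bool" where
  "valid_edge n e \<longleftrightarrow> (\<exists>u v. u \<noteq> v \<and> u \<in> {1..n} \<and> v \<in> {1..n} \<and> e = {u, v})"

definition graph_stream :: "nat \<Rightarrow> edge list \<Rightarrow> bool" where
  "graph_stream n S \<longleftrightarrow> distinct S \<and> (\<forall>e\<in>set S. valid_edge n e)"

definition is_matching :: "edge set \<Rightarrow> bool" where
  "is_matching M \<longleftrightarrow> (\<forall>e\<in>M. \<forall>f\<in>M. e \<noteq> f \<longrightarrow> e \<inter> f = {})"

definition is_vertex_cover :: "nat \<Rightarrow> edge set \<Rightarrow> nat set \<Rightarrow> bool" where
  "is_vertex_cover n E C \<longleftrightarrow> C \<subseteq> {1..n} \<and> (\<forall>e\<in>E. e \<inter> C \<noteq> {})"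

definition max_matching :: "nat \<Rightarrow> edge list \<Rightarrow> real" where
  "max_matching n S = real (Max {card M | M. M \<subseteq> set S \<and> is_matching M})"

definition min_vertex_cover :: "nat \<Rightarrow> edge list \<Rightarrow> real" where
  "min_vertex_cover n S = real (Min {card C | C. is_vertex_cover n (set S) C})"

text \<open>Segments A, B, C are disjoint and consecutive, i.e. A @ B @ C is a graph stream.
  The poly(n) bound is uniform: some fixed polynomial c * (n+1)^k.\<close>
definition almost_smooth :: "real \<Rightarrow> (nat \<Rightarrow> edge list \<Rightarrow> real) \<Rightarrow> bool" where
  "almost_smooth \<alpha> f \<longleftrightarrow>
     (\<forall>n A. graph_stream n A \<longrightarrow> 0 \<le> f n A) \<and>
     (\<forall>n A B. graph_stream n (A @ B) \<longrightarrow> f n B \<le> f n (A @ B)) \<and>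
     (\<exists>c::real. \<exists>k::nat. \<forall>n A. graph_stream n A \<longrightarrow> f n A \<le> c * (real n + 1) ^ k) \<and>
     (\<forall>n A B C. graph_stream n (A @ B @ C) \<and> f n (A @ B) \<noteq> 0 \<and> f n (A @ B @ C) \<noteq> 0 \<longrightarrow>
        f n B / f n (A @ B) \<le> \<alpha> * (f n (B @ C) / f n (A @ B @ C)))"

end

theory Submission
  imports Defs
begin

lemma generic:
  assumes fg: "\<And>n S. f n S = g n (set S)"
  and nonneg: "\<And>n E. finite E \<Longrightarrow> \<forall>e\<in>E. valid_edge n e \<Longrightarrow> 0 \<le> g n E"
  and mono: "\<And>n E F. finite F \<Longrightarrow> \<forall>e\<in>F. valid_edge n e \<Longrightarrow> E \<subseteq> F \<Longrightarrow> g n E \<le> g n F"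
  and sub: "\<And>n E F. finite E \<Longrightarrow> finite F \<Longrightarrow> \<forall>e\<in>E \<union> F. valid_edge n e \<Longrightarrow> g n (E \<union> F) \<le> g n E + g n F"
  and bound: "\<exists>c k. \<forall>n E. finite E \<longrightarrow> (\<forall>e\<in>E. valid_edge n e) \<longrightarrow> g n E \<le> c * (real n + 1)^k"
  shows "almost_smooth 2 f"
  unfolding almost_smooth_def
proof (intro conjI allI impI)
  fix n A assume "graph_stream n A"
  then show "0 \<le> f n A" using nonneg unfolding fg graph_stream_def by auto
next
  fix n A B assume "graph_stream n (A @ B)"
  then show "f n B \<le> f n (A @ B)" using mono[of "set (A@B)" n "set B"] unfolding fg graph_stream_def by auto
next
  obtain c k where ck: "\<forall>n E. finite E \<longrightarrow> (\<forall>e\<in>E. valid_edge n e) \<longrightarrow> g n E \<le> c * (real n + 1)^k"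
    using bound by blast
  show "\<exists>c k. \<forall>n A. graph_stream n A \<longrightarrow> f n A \<le> c * (real n + 1) ^ k"
    apply (rule exI[of _ c], rule exI[of _ k])
    using ck unfolding fg graph_stream_def by auto
next
  fix n A B C
  assume h: "graph_stream n (A @ B @ C) \<and> f n (A @ B) \<noteq> 0 \<and> f n (A @ B @ C) \<noteq> 0"
  define a where "a = set A" define b where "b = set B" define c where "c = set C"
  have v: "\<forall>e\<in>a \<union> b \<union> c. valid_edge n e" using h unfolding graph_stream_def a_def b_def c_def by auto
  have fin: "finite a" "finite b" "finite c" unfolding a_def b_def c_def by auto
  have e1: "f n B = g n b" "f n (A@B) = g n (a \<union> b)" "f n (B@C) = g n (b \<union> c)"
    "f n (A@B@C) = g n (a \<union> b \<union> c)" unfolding fg a_def b_def c_def by (auto simp: Un_assoc)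
  have B0: "0 \<le> g n b" using nonneg[of b n] v fin by auto
  have AB0: "0 \<le> g n (a \<union> b)" using nonneg[of "a \<union> b" n] v fin by auto
  have BC0: "0 \<le> g n (b \<union> c)" using nonneg[of "b \<union> c" n] v fin by auto
  have m1: "g n b \<le> g n (a \<union> b)" using mono[of "a \<union> b" n b] v fin by auto
  have m2: "g n b \<le> g n (b \<union> c)" using mono[of "b \<union> c" n b] v fin by auto
  have m3: "g n c \<le> g n (b \<union> c)" using mono[of "b \<union> c" n c] v fin by auto
  have s: "g n (a \<union> b \<union> c) \<le> g n (a \<union> b) + g n c" using sub[of "a \<union> b" c n] v fin by auto
  have ABp: "0 < g n (a \<union> b)" using AB0 h e1 by auto
  have ABCp: "0 < g n (a \<union> b \<union> c)" using h e1 nonneg[of "a \<union> b \<union> c" n] v fin by auto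
  have key: "g n b * g n (a \<union> b \<union> c) \<le> 2 * g n (b \<union> c) * g n (a \<union> b)"
  proof -
    have "g n b * g n (a \<union> b \<union> c) \<le> g n b * (g n (a \<union> b) + g n (b \<union> c))"
      using s m3 B0 by (intro mult_left_mono) auto
    also have "\<dots> = g n b * g n (a \<union> b) + g n b * g n (b \<union> c)" by (simp add: algebra_simps)
    also have "\<dots> \<le> g n (b \<union> c) * g n (a \<union> b) + g n (a \<union> b) * g n (b \<union> c)"
      using m1 m2 B0 AB0 BC0 by (intro add_mono mult_right_mono) auto
    finally show ?thesis by (simp add: algebra_simps)
  qed
  show "f n B / f n (A @ B) \<le> 2 * (f n (B @ C) / f n (A @ B @ C))"
    unfolding e1 using key ABp ABCp by (simp add: field_simps)
qed

definition mmg :: "nat \<Rightarrow> edge set \<Rightarrow> real" where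
  "mmg n E = real (Max {card M | M. M \<subseteq> E \<and> is_matching M})"

lemma mm_fin: "finite E \<Longrightarrow> finite {card M | M. M \<subseteq> E \<and> is_matching M}"
proof -
  assume "finite E"
  have "{card M | M. M \<subseteq> E \<and> is_matching M} \<subseteq> card ` Pow E" by auto
  then show ?thesis using \<open>finite E\<close> finite_subset by blast
qed

lemma mm_ge: "finite E \<Longrightarrow> M \<subseteq> E \<Longrightarrow> is_matching M \<Longrightarrow> card M \<le> Max {card M | M. M \<subseteq> E \<and> is_matching M}"
  by (rule Max_ge[OF mm_fin]) auto

lemma mm_obt: "finite E \<Longrightarrow> \<exists>M. M \<subseteq> E \<and> is_matching M \<and> Max {card M | M. M \<subseteq> E \<and> is_matching M} = card M"
proof -
  assume f: "finite E"
  have "{} \<subseteq> E \<and> is_matching {}" by (simp add: is_matching_def)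
  then have "{card M | M. M \<subseteq> E \<and> is_matching M} \<noteq> {}" by blast
  from Max_in[OF mm_fin[OF f] this] show ?thesis by auto
qed

lemma matching_sub: "is_matching M \<Longrightarrow> N \<subseteq> M \<Longrightarrow> is_matching N"
  unfolding is_matching_def by blast

lemma valid_card: assumes "\<forall>e\<in>E. valid_edge n e" shows "card E \<le> n * n"
proof -
  have "E \<subseteq> (\<lambda>p. {fst p, snd p}) ` ({1..n} \<times> {1..n})"
  proof
    fix e assume "e \<in> E"
    then obtain u v where "u \<in> {1..n}" "v \<in> {1..n}" "e = {u, v}" using assms unfolding valid_edge_def by blast
    then show "e \<in> (\<lambda>p. {fst p, snd p}) ` ({1..n} \<times> {1..n})" by (intro image_eqI[of _ _ "(u,v)"]) auto
  qed
  then have "card E \<le> card ((\<lambda>p. {fst p, snd p}) ` ({1..n} \<times> {1..n}))" by (intro card_mono) auto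
  also have "\<dots> \<le> card ({1..n} \<times> {1..n})" by (rule card_image_le) auto
  finally show ?thesis by (simp add: card_cartesian_product)
qed

lemma mm_smooth: "almost_smooth 2 max_matching"
proof (rule generic[where g = mmg])
  show "\<And>n S. max_matching n S = mmg n (set S)" unfolding max_matching_def mmg_def by simp
  show "\<And>n E. finite E \<Longrightarrow> \<forall>e\<in>E. valid_edge n e \<Longrightarrow> 0 \<le> mmg n E" unfolding mmg_def by simp
  show "\<And>n E F. finite F \<Longrightarrow> \<forall>e\<in>F. valid_edge n e \<Longrightarrow> E \<subseteq> F \<Longrightarrow> mmg n E \<le> mmg n F"
  proof -
    fix n and E F :: "edge set" assume "finite F" "E \<subseteq> F"
    then have "finite E" using finite_subset by blast
    obtain M where "M \<subseteq> E" "is_matching M" "Max {card M | M. M \<subseteq> E \<and> is_matching M} = card M"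
      using mm_obt[OF \<open>finite E\<close>] by blast
    moreover have "card M \<le> Max {card M | M. M \<subseteq> F \<and> is_matching M}"
      using mm_ge[OF \<open>finite F\<close>, of M] calculation \<open>E \<subseteq> F\<close> by auto
    ultimately show "mmg n E \<le> mmg n F" unfolding mmg_def by simp
  qed
  show "\<And>n E F. finite E \<Longrightarrow> finite F \<Longrightarrow> \<forall>e\<in>E \<union> F. valid_edge n e \<Longrightarrow> mmg n (E \<union> F) \<le> mmg n E + mmg n F"
  proof -
    fix n and E F :: "edge set" assume fE: "finite E" and fF: "finite F"
    obtain M where M: "M \<subseteq> E \<union> F" "is_matching M" "Max {card M | M. M \<subseteq> E \<union> F \<and> is_matching M} = card M"
      using mm_obt[of "E \<union> F"] fE fF by blast
    have fM: "finite M" using M(1) fE fF finite_subset by blast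
    have "M = (M \<inter> E) \<union> (M - E)" by blast
    then have "card M \<le> card (M \<inter> E) + card (M - E)" by (metis card_Un_le)
    also have "card (M \<inter> E) \<le> Max {card M | M. M \<subseteq> E \<and> is_matching M}"
      using mm_ge[OF fE, of "M \<inter> E"] matching_sub[OF M(2)] by auto
    also have "card (M - E) \<le> Max {card M | M. M \<subseteq> F \<and> is_matching M}"
      using mm_ge[OF fF, of "M - E"] matching_sub[OF M(2)] M(1) by auto
    finally show "mmg n (E \<union> F) \<le> mmg n E + mmg n F" unfolding mmg_def M(3)
      by (simp flip: of_nat_add)
  qed
  show "\<exists>c k. \<forall>n E. finite E \<longrightarrow> (\<forall>e\<in>E. valid_edge n e) \<longrightarrow> mmg n E \<le> c * (real n + 1)^k"
  proof (rule exI[of _ 1], rule exI[of _ 2], intro allI impI)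
    fix n and E :: "edge set" assume fE: "finite E" and v: "\<forall>e\<in>E. valid_edge n e"
    obtain M where M: "M \<subseteq> E" "is_matching M" "Max {card M | M. M \<subseteq> E \<and> is_matching M} = card M"
      using mm_obt[OF fE] by blast
    have "card M \<le> card E" using M(1) fE by (rule card_mono[rotated])
    also have "\<dots> \<le> n * n" by (rule valid_card[OF v])
    finally have "real (card M) \<le> real n * real n" by (metis of_nat_le_iff of_nat_mult)
    also have "\<dots> \<le> (real n + 1) ^ 2" by (simp add: power2_eq_square algebra_simps)
    finally show "mmg n E \<le> 1 * (real n + 1) ^ 2" unfolding mmg_def M(3) by simp
  qed
qed

definition vcg :: "nat \<Rightarrow> edge set \<Rightarrow> real" where
  "vcg n E = real (Min {card C | C. is_vertex_cover n E C})"

lemma vc_fin: "finite {card C | C. is_vertex_cover n E C}"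
proof -
  have "{card C | C. is_vertex_cover n E C} \<subseteq> card ` Pow {1..n}" unfolding is_vertex_cover_def by auto
  then show ?thesis using finite_subset by blast
qed

lemma vc_le: "is_vertex_cover n E C \<Longrightarrow> Min {card C | C. is_vertex_cover n E C} \<le> card C"
  by (rule Min_le[OF vc_fin]) auto

lemma vc_full: "\<forall>e\<in>E. valid_edge n e \<Longrightarrow> is_vertex_cover n E {1..n}"
  unfolding is_vertex_cover_def valid_edge_def by fastforce

lemma vc_obt: "\<forall>e\<in>E. valid_edge n e \<Longrightarrow> \<exists>C. is_vertex_cover n E C \<and> Min {card C | C. is_vertex_cover n E C} = card C"
proof -
  assume "\<forall>e\<in>E. valid_edge n e"
  then have "{card C | C. is_vertex_cover n E C} \<noteq> {}" using vc_full by blast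
  from Min_in[OF vc_fin this] show ?thesis by auto
qed

lemma vc_smooth: "almost_smooth 2 min_vertex_cover"
proof (rule generic[where g = vcg])
  show "\<And>n S. min_vertex_cover n S = vcg n (set S)" unfolding min_vertex_cover_def vcg_def by simp
  show "\<And>n E. finite E \<Longrightarrow> \<forall>e\<in>E. valid_edge n e \<Longrightarrow> 0 \<le> vcg n E" unfolding vcg_def by simp
  show "\<And>n E F. finite F \<Longrightarrow> \<forall>e\<in>F. valid_edge n e \<Longrightarrow> E \<subseteq> F \<Longrightarrow> vcg n E \<le> vcg n F"
  proof -
    fix n and E F :: "edge set" assume v: "\<forall>e\<in>F. valid_edge n e" and s: "E \<subseteq> F"
    obtain C where C: "is_vertex_cover n F C" "Min {card C | C. is_vertex_cover n F C} = card C"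
      using vc_obt[OF v] by blast
    have "is_vertex_cover n E C" using C(1) s unfolding is_vertex_cover_def by blast
    then show "vcg n E \<le> vcg n F" unfolding vcg_def C(2) using vc_le by simp
  qed
  show "\<And>n E F. finite E \<Longrightarrow> finite F \<Longrightarrow> \<forall>e\<in>E \<union> F. valid_edge n e \<Longrightarrow> vcg n (E \<union> F) \<le> vcg n E + vcg n F"
  proof -
    fix n and E F :: "edge set" assume v: "\<forall>e\<in>E \<union> F. valid_edge n e"
    obtain C1 where C1: "is_vertex_cover n E C1" "Min {card C | C. is_vertex_cover n E C} = card C1"
      using vc_obt[of E n] v by blast
    obtain C2 where C2: "is_vertex_cover n F C2" "Min {card C | C. is_vertex_cover n F C} = card C2"
      using vc_obt[of F n] v by blast
    have "is_vertex_cover n (E \<union> F) (C1 \<union> C2)" using C1(1) C2(1) unfolding is_vertex_cover_def by blast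
    then have "Min {card C | C. is_vertex_cover n (E \<union> F) C} \<le> card (C1 \<union> C2)" by (rule vc_le)
    also have "\<dots> \<le> card C1 + card C2" by (rule card_Un_le)
    finally show "vcg n (E \<union> F) \<le> vcg n E + vcg n F" unfolding vcg_def C1(2) C2(2)
      by (simp flip: of_nat_add)
  qed
  show "\<exists>c k. \<forall>n E. finite E \<longrightarrow> (\<forall>e\<in>E. valid_edge n e) \<longrightarrow> vcg n E \<le> c * (real n + 1)^k"
  proof (rule exI[of _ 1], rule exI[of _ 1], intro allI impI)
    fix n and E :: "edge set" assume "finite E" and v: "\<forall>e\<in>E. valid_edge n e"
    have "Min {card C | C. is_vertex_cover n E C} \<le> card {1..n}" using vc_le[OF vc_full[OF v]] .
    then show "vcg n E \<le> 1 * (real n + 1) ^ 1" unfolding vcg_def by simp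
  qed
qed

theorem corollary2p5:
  shows "almost_smooth 2 max_matching \<and> almost_smooth 2 min_vertex_cover"
  using mm_smooth vc_smooth by blast

end
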